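(* Let $\mathbf{T}\subset\mathbb{S}^3$ be a $\mathbb{Z}_2$-symmetric spherical tetrahedron with dihedral angles $A$, $B=E$, $C=F$, $D$ and edge lengths $l_A$, $l_B=l_E$, $l_C=l_F$, $l_D$, edge matrix $G^\star$ and Gram matrix $G$. Put $\Delta=\det G$, $\Delta^\star=\det G^\star$, and $$u=\sqrt{\frac{c^\star_{00}c^\star_{22}}{\Delta^\star}},\qquad v=\sqrt{\frac{c_{00}c_{22}}{\Delta}}.$$ Then $$u=\frac{\sin\frac{l_A+l_D}{2}}{\sin\frac{A+D}{2}}=\frac{\sin\frac{l_A-l_D}{2}}{\sin\frac{D-A}{2}}=\frac{\sin l_B}{\sin B}=\frac{\sin l_C}{\sin C}=v^{-1}.$$
   Context: A spherical tetrahedron $\mathbf{T}\subset\mathbb{S}^3\subset\mathbb{R}^4$ is the intersection of $\mathbb{S}^3$ with the cone over four linearly independent unit vectors $\mathrm{p}_0,\dots,\mathrm{p}_3$ (its vertices). Edge lengths $l_{ij}\in[0,\pi]$: $\cos l_{ij}=\langle \mathrm{p}_i,\mathrm{p}_j\rangle$; with $\mathrm{v}_i$ the outer unit normal to the face opposite $\mathrm{p}_i$, dihedral angles $\alpha_{ij}\in[0,\pi]$: $\cos\alpha_{ij}=-\langle\mathrm{v}_i,\mathrm{v}_j\rangle$. Notation: $l_A=l_{01}$, $l_B=l_{02}$, $l_C=l_{03}$, $l_D=l_{23}$, $l_E=l_{13}$, $l_F=l_{12}$, and $A,\dots,F$ are the dihedral angles along the edges of lengths $l_A,\dots,l_F$.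 The edge matrix is $G^\star=\begin{pmatrix}1&\cos l_A&\cos l_B&\cos l_C\\ \cos l_A&1&\cos l_F&\cos l_E\\ \cos l_B&\cos l_F&1&\cos l_D\\ \cos l_C&\cos l_E&\cos l_D&1\end{pmatrix}$ and the Gram matrix is $G=\begin{pmatrix}1&-\cos D&-\cos E&-\cos F\\ -\cos D&1&-\cos C&-\cos B\\ -\cos E&-\cos C&1&-\cos A\\ -\cos F&-\cos B&-\cos A&1\end{pmatrix}$ (rows/columns indexed $0,\dots,3$). $c_{ij}$ and $c^\star_{ij}$ denote the $(i,j)$-cofactors $(-1)^{i+j}\det(\text{minor})$ of $G$ and $G^\star$. $\mathbf{T}$ is $\mathbb{Z}_2$-symmetric if it is invariant under the rotation through $\pi$ about the axis through the midpoints of the edges $\mathrm{p}_0\mathrm{p}_1$ and $\mathrm{p}_2\mathrm{p}_3$; then $l_B=l_E$, $l_C=l_F$, $B=E$, $C=F$. The number $u$ is called the principal parameter and $v$ the dual parameter of $\mathbf{T}$. *)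

theory Defs
  imports "HOL-Analysis.Analysis"
begin

definition sph_tetra_vertices :: "(4 \<Rightarrow> real^4) \<Rightarrow> bool" where
  "sph_tetra_vertices p \<longleftrightarrow> (\<forall>i. norm (p i) = 1) \<and> inj p \<and> independent (range p)"

definition sph_tetra :: "(4 \<Rightarrow> real^4) \<Rightarrow> (real^4) set" where
  "sph_tetra p = {x. norm x = 1 \<and> (\<exists>c. (\<forall>i. c i \<ge> 0) \<and> x = (\<Sum>i\<in>UNIV. c i *\<^sub>R p i))}"

definition edge_len :: "(4 \<Rightarrow> real^4) \<Rightarrow> 4 \<Rightarrow> 4 \<Rightarrow> real" where
  "edge_len p i j = arccos (p i \<bullet> p j)"

definition outer_normal :: "(4 \<Rightarrow> real^4) \<Rightarrow> 4 \<Rightarrow> real^4" where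
  "outer_normal p i = (THE v. norm v = 1 \<and> (\<forall>j. j \<noteq> i \<longrightarrow> v \<bullet> p j = 0) \<and> v \<bullet> p i < 0)"

definition dihedral :: "(4 \<Rightarrow> real^4) \<Rightarrow> 4 \<Rightarrow> 4 \<Rightarrow> real" where
  "dihedral p i j = arccos (- (outer_normal p i \<bullet> outer_normal p j))"

definition edge_matrix :: "(4 \<Rightarrow> real^4) \<Rightarrow> real^4^4" where
  "edge_matrix p = (\<chi> i j. if i = j then 1 else cos (edge_len p i j))"

definition gram_matrix :: "(4 \<Rightarrow> real^4) \<Rightarrow> real^4^4" where
  "gram_matrix p = (\<chi> i j. if i = j then 1 else - cos (dihedral p i j))"

text \<open>Cofactors of a 4x4 matrix, rows/columns indexed by naturals 0..3.\<close>
definition skip_idx :: "nat \<Rightarrow> 3 \<Rightarrow> nat" where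
  "skip_idx i k = (let n = (if k = 0 then 0 else if k = 1 then 1 else (2::nat)) in
                   if n < i then n else n + 1)"

definition minor4 :: "real^4^4 \<Rightarrow> nat \<Rightarrow> nat \<Rightarrow> real^3^3" where
  "minor4 M i j = (\<chi> k l. M $ of_nat (skip_idx i k) $ of_nat (skip_idx j l))"

definition cofactor4 :: "real^4^4 \<Rightarrow> nat \<Rightarrow> nat \<Rightarrow> real" where
  "cofactor4 M i j = (-1) ^ (i + j) * det (minor4 M i j)"

text \<open>Rotation through pi about the great circle through the midpoints of p0p1 and p2p3:
  the linear map fixing span{p0+p1, p2+p3} pointwise and acting as -id on its orthogonal complement.\<close>
definition z2_rotation :: "(4 \<Rightarrow> real^4) \<Rightarrow> real^4 \<Rightarrow> real^4" where
  "z2_rotation p = (THE f. linear f \<and>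
      (\<forall>x\<in>span {p 0 + p 1, p 2 + p 3}. f x = x) \<and>
      (\<forall>x. orthogonal x (p 0 + p 1) \<and> orthogonal x (p 2 + p 3) \<longrightarrow> f x = - x))"

definition z2_symmetric :: "(4 \<Rightarrow> real^4) \<Rightarrow> bool" where
  "z2_symmetric p \<longleftrightarrow> z2_rotation p ` sph_tetra p = sph_tetra p"

end

theory Submission
  imports Defs
begin


lemma four_eq0: "(4::4) = 0" by simp

lemma UNIV4: "(UNIV::4 set) = {0,1,2,3}"
  using exhaust_4 by (auto simp: four_eq0)

lemma sum4: "(\<Sum>i\<in>(UNIV::4 set). f i) = f 0 + f 1 + f 2 + f 3"
  unfolding UNIV4 by (simp add: ac_simps)

lemma det4: "det (A::'a::comm_ring_1^4^4) = A$1$1*A$2$2*A$3$3*A$0$0 - A$1$1*A$2$2*A$3$0*A$0$3 - A$1$1*A$2$3*A$3$2*A$0$0 + A$1$1*A$2$3*A$3$0*A$0$2 + A$1$1*A$2$0*A$3$2*A$0$3 - A$1$1*A$2$0*A$3$3*A$0$2 - A$1$2*A$2$1*A$3$3*A$0$0 + A$1$2*A$2$1*A$3$0*A$0$3 + A$1$2*A$2$3*A$3$1*A$0$0 - A$1$2*A$2$3*A$3$0*A$0$1 - A$1$2*A$2$0*A$3$1*A$0$3 + A$1$2*A$2$0*A$3$3*A$0$1 + A$1$3*A$2$1*A$3$2*A$0$0 - A$1$3*A$2$1*A$3$0*A$0$2 - A$1$3*A$2$2*A$3$1*A$0$0 + A$1$3*A$2$2*A$3$0*A$0$1 + A$1$3*A$2$0*A$3$1*A$0$2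 - A$1$3*A$2$0*A$3$2*A$0$1 - A$1$0*A$2$1*A$3$2*A$0$3 + A$1$0*A$2$1*A$3$3*A$0$2 + A$1$0*A$2$2*A$3$1*A$0$3 - A$1$0*A$2$2*A$3$3*A$0$1 - A$1$0*A$2$3*A$3$1*A$0$2 + A$1$0*A$2$3*A$3$2*A$0$1"
proof -
  have f1: "finite {1::4, 2, 3}" "0 \<notin> {1::4, 2, 3}" by auto
  have f2: "finite {2::4, 3}" "1 \<notin> {2::4, 3}" by auto
  have f3: "finite {3::4}" "2 \<notin> {3::4}" by auto
  show ?thesis
    unfolding det_def UNIV4
    unfolding sum_over_permutations_insert[OF f1]
    unfolding sum_over_permutations_insert[OF f2]
    unfolding sum_over_permutations_insert[OF f3]
    unfolding permutes_sing
    by (simp add: sign_swap_id permutation_swap_id sign_compose permutation_compose sign_id swap_id_eq algebra_simps)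
qed

lemma cof00: "cofactor4 M 0 0 = M$1$1*M$2$2*M$3$3 + M$1$2*M$2$3*M$3$1 + M$1$3*M$2$1*M$3$2
   - M$1$1*M$2$3*M$3$2 - M$1$2*M$2$1*M$3$3 - M$1$3*M$2$2*M$3$1"
  by (simp add: cofactor4_def minor4_def det_3 skip_idx_def algebra_simps)

lemma cof22: "cofactor4 M 2 2 = M$0$0*M$1$1*M$3$3 + M$0$1*M$1$3*M$3$0 + M$0$3*M$1$0*M$3$1
   - M$0$0*M$1$3*M$3$1 - M$0$1*M$1$0*M$3$3 - M$0$3*M$1$1*M$3$0"
  by (simp add: cofactor4_def minor4_def det_3 skip_idx_def algebra_simps)


lemma det4_scaled: fixes y :: "4 \<Rightarrow> real"
  assumes "\<And>i. y i \<noteq> 0"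
  shows "det (\<chi> i j. e i j / (y i * y j)) = det (\<chi> i j. e i j) / (y 0*y 1*y 2*y 3)^2"
proof -
  have h: "y 0 \<noteq> 0" "y 1 \<noteq> 0" "y 2 \<noteq> 0" "y 3 \<noteq> 0" using assms by auto
  show ?thesis unfolding det4 using h by (simp add: field_simps power2_eq_square)
qed

lemma cof00_scaled: fixes y :: "4 \<Rightarrow> real"
  assumes "\<And>i. y i \<noteq> 0"
  shows "cofactor4 (\<chi> i j. e i j / (y i * y j)) 0 0 = cofactor4 (\<chi> i j. e i j) 0 0 / (y 1*y 2*y 3)^2"
proof -
  have h: "y 0 \<noteq> 0" "y 1 \<noteq> 0" "y 2 \<noteq> 0" "y 3 \<noteq> 0" using assms by auto
  show ?thesis unfolding cof00 using h by (simp add: field_simps power2_eq_square)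
qed

lemma cof22_scaled: fixes y :: "4 \<Rightarrow> real"
  assumes "\<And>i. y i \<noteq> 0"
  shows "cofactor4 (\<chi> i j. e i j / (y i * y j)) 2 2 = cofactor4 (\<chi> i j. e i j) 2 2 / (y 0*y 1*y 3)^2"
proof -
  have h: "y 0 \<noteq> 0" "y 1 \<noteq> 0" "y 2 \<noteq> 0" "y 3 \<noteq> 0" using assms by auto
  show ?thesis unfolding cof22 using h by (simp add: field_simps power2_eq_square)
qed




lemma lin0:
  assumes "sph_tetra_vertices p" "(\<Sum>i\<in>UNIV. c i *\<^sub>R p i) = 0"
  shows "c i = 0"
proof -
  have inj: "inj p" and ind: "independent (range p)" using assms(1) unfolding sph_tetra_vertices_def by auto
  have "(\<Sum>v\<in>range p. (c \<circ> inv p) v *\<^sub>R v) = (\<Sum>j\<in>UNIV. (c \<circ> inv p) (p j) *\<^sub>R p j)"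
    using inj by (simp add: sum.reindex)
  also have "\<dots> = (\<Sum>j\<in>UNIV. c j *\<^sub>R p j)" using inj by simp
  finally have "(\<Sum>v\<in>range p. (c \<circ> inv p) v *\<^sub>R v) = 0" using assms(2) by simp
  then have "(c \<circ> inv p) (p i) = 0" using ind unfolding eucl.independent_explicit by blast
  then show ?thesis using inj by simp
qed

lemma lin4:
  assumes "sph_tetra_vertices p" "c0 *\<^sub>R p 0 + c1 *\<^sub>R p 1 + c2 *\<^sub>R p 2 + c3 *\<^sub>R p 3 = 0"
  shows "c0 = 0 \<and> c1 = 0 \<and> c2 = 0 \<and> c3 = 0"
proof -
  define c where "c = (\<lambda>i::4. if i = 0 then c0 else if i = 1 then c1 else if i = 2 then c2 else c3)"
  have "(\<Sum>i\<in>UNIV. c i *\<^sub>R p i) = 0" using assms(2) by (simp add: sum4 c_def)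
  then have "\<And>i. c i = 0" using lin0[OF assms(1)] by blast
  from this[of 0] this[of 1] this[of 2] this[of 3] show ?thesis by (simp add: c_def)
qed

lemma span_p:
  assumes "sph_tetra_vertices p" "\<And>j. x \<bullet> p j = 0"
  shows "x = 0"
proof -
  have inj: "inj p" and ind: "independent (range p)" using assms(1) unfolding sph_tetra_vertices_def by auto
  have "card (range p) = 4" using inj by (simp add: card_image)
  also have "\<dots> = dim (UNIV :: (real^4) set)" by (simp add: eucl.dim_UNIV)
  finally have "UNIV \<subseteq> span (range p)"
    using eucl.card_eq_dim[of "range p" UNIV] ind by auto
  then have "orthogonal x x"
    by (intro orthogonal_to_span[of x "range p"]) (auto simp: orthogonal_def assms(2))
  then show ?thesis by (simp add: orthogonal_def)
qed

lemma outer_normal_char: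
  assumes "sph_tetra_vertices p" "\<And>j. j \<noteq> i \<Longrightarrow> w \<bullet> p j = 0" "w \<bullet> p i < 0"
  shows "outer_normal p i = (1 / norm w) *\<^sub>R w"
  unfolding outer_normal_def
proof (rule the_equality)
  have w0: "w \<noteq> 0" using assms(3) by auto
  then show "norm ((1 / norm w) *\<^sub>R w) = 1 \<and> (\<forall>j. j \<noteq> i \<longrightarrow> (1 / norm w) *\<^sub>R w \<bullet> p j = 0) \<and> (1 / norm w) *\<^sub>R w \<bullet> p i < 0"
    using assms(2,3) by (simp add: divide_less_0_iff)
next
  fix v assume v: "norm v = 1 \<and> (\<forall>j. j \<noteq> i \<longrightarrow> v \<bullet> p j = 0) \<and> v \<bullet> p i < 0"
  define t where "t = (v \<bullet> p i) / (w \<bullet> p i)"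
  have tpos: "t > 0" using v assms(3) by (simp add: t_def divide_neg_neg)
  have "\<And>j. (v - t *\<^sub>R w) \<bullet> p j = 0"
  proof -
    fix j show "(v - t *\<^sub>R w) \<bullet> p j = 0"
      using v assms(2,3) by (cases "j = i") (auto simp: t_def inner_diff_left)
  qed
  then have "v - t *\<^sub>R w = 0" using span_p[OF assms(1)] by blast
  then have vt: "v = t *\<^sub>R w" by simp
  then have "t * norm w = 1" using v tpos by simp
  moreover have "norm w \<noteq> 0" using assms(3) by auto
  ultimately have "t = 1 / norm w" by (simp add: field_simps)
  then show "v = (1 / norm w) *\<^sub>R w" using vt by simp
qed

lemma inner_le1: "norm x = 1 \<Longrightarrow> norm y = 1 \<Longrightarrow> \<bar>x \<bullet> y\<bar> \<le> (1::real)"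
  using Cauchy_Schwarz_ineq2[of x y] by simp

lemma edge_matrix_eq:
  assumes "sph_tetra_vertices p"
  shows "edge_matrix p = (\<chi> i j. p i \<bullet> p j)"
proof -
  have n: "\<And>i. norm (p i) = 1" using assms unfolding sph_tetra_vertices_def by auto
  have "\<And>i j. \<bar>p i \<bullet> p j\<bar> \<le> 1" using inner_le1 n by blast
  then have c: "\<And>i j. cos (edge_len p i j) = p i \<bullet> p j" unfolding edge_len_def
    by (simp add: abs_le_iff)
  have d: "\<And>i. p i \<bullet> p i = 1" using n by (simp add: dot_square_norm)
  show ?thesis unfolding edge_matrix_def by (simp add: c d vec_eq_iff)
qed

lemma gram_matrix_eq:
  assumes "\<And>i. norm (outer_normal p i) = 1"
  shows "gram_matrix p = (\<chi> i j. outer_normal p i \<bullet> outer_normal p j)"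
proof -
  have "\<And>i j. \<bar>outer_normal p i \<bullet> outer_normal p j\<bar> \<le> 1" using inner_le1 assms by blast
  then have c: "\<And>i j. cos (dihedral p i j) = - (outer_normal p i \<bullet> outer_normal p j)" unfolding dihedral_def
    by (simp add: abs_le_iff)
  have d: "\<And>i. outer_normal p i \<bullet> outer_normal p i = 1" using assms by (simp add: dot_square_norm)
  show ?thesis unfolding gram_matrix_def by (simp add: c d vec_eq_iff)
qed

lemma gram_pos:
  assumes "sph_tetra_vertices p"
  shows "det (edge_matrix p) > 0"
proof -
  define P :: "real^4^4" where "P = (\<chi> i. p i)"
  have "edge_matrix p = P ** transpose P"
    unfolding edge_matrix_eq[OF assms] P_def
    by (simp add: vec_eq_iff matrix_matrix_mult_def transpose_def inner_vec_def mult.commute)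
  then have e: "det (edge_matrix p) = det P * det P" by (simp add: det_mul det_transpose)
  have "\<forall>c. (\<Sum>i\<in>UNIV. c i *s row i P) = 0 \<longrightarrow> (\<forall>i. c i = 0)"
  proof (intro allI impI)
    fix c :: "4 \<Rightarrow> real" and i assume "(\<Sum>i\<in>UNIV. c i *s row i P) = 0"
    then have "(\<Sum>i\<in>UNIV. c i *\<^sub>R p i) = 0" by (simp add: P_def row_def scalar_mult_eq_scaleR)
    then show "c i = 0" using lin0[OF assms] by blast
  qed
  then have "\<exists>B::real^4^4. P ** B = mat 1"
    by (simp add: matrix_right_invertible_independent_rows)
  then have "invertible P" unfolding invertible_right_inverse by blast
  then have "det P \<noteq> 0" by (simp add: invertible_det_nz)
  then show ?thesis unfolding e by (simp add: zero_less_mult_iff not_le less_le)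
qed

lemma half_sin_sq: "sin ((x::real)/2)^2 = (1 - cos x) / 2"
  using cos_double_sin[of "x/2"] by simp




lemma coef2:
  assumes tv: "sph_tetra_vertices p" and ij: "i \<noteq> j" and eq: "a *\<^sub>R p i + b *\<^sub>R p j = 0"
  shows "a = 0 \<and> b = 0"
proof -
  define c where "c k = (if k = i then a else if k = j then b else 0)" for k
  have "(\<Sum>k\<in>UNIV. c k *\<^sub>R p k) = (\<Sum>k\<in>{i,j}. c k *\<^sub>R p k)"
    by (rule sum.mono_neutral_right) (auto simp: c_def)
  also have "\<dots> = a *\<^sub>R p i + b *\<^sub>R p j" using ij by (simp add: c_def)
  finally have "(\<Sum>k\<in>UNIV. c k *\<^sub>R p k) = 0" using eq by simp
  then have "c i = 0" "c j = 0" using lin0[OF tv] by blast+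
  then show ?thesis using ij by (simp add: c_def)
qed

lemma vec_half:
  fixes a b :: "real^4" assumes "a - (b - a) = b" shows "b = a"
proof -
  have "\<forall>i. a$i - (b$i - a$i) = b$i" using assms by (simp add: vec_eq_iff)
  then show ?thesis by (auto simp: vec_eq_iff)
qed

lemma inner_aux:
  fixes a b c e :: "'a::real_inner"
  assumes "a \<bullet> e = 0" "b \<bullet> c = 0"
  shows "(a - b) \<bullet> (c - e) = (a + b) \<bullet> (c + e)"
  using assms by (simp add: inner_diff_left inner_diff_right inner_add_left inner_add_right)

lemma swap_lemma:
  assumes tv: "sph_tetra_vertices p" and lin: "linear F" and FF: "\<And>x. F (F x) = x"
    and excl: "F (p i) \<noteq> p i" and ij: "i \<noteq> j"
    and Fi: "F (p i) = ci *\<^sub>R p i + cj *\<^sub>R p j" and Fj: "F (p j) = di *\<^sub>R p i + dj *\<^sub>R p j"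
    and nn: "ci \<ge> 0" "cj \<ge> 0" "di \<ge> 0" "dj \<ge> 0" and s1: "ci + di = 1" and s2: "cj + dj = 1"
  shows "F (p i) = p j \<and> F (p j) = p i"
proof -
  have "p i = F (F (p i))" using FF by simp
  also have "\<dots> = ci *\<^sub>R F (p i) + cj *\<^sub>R F (p j)" using lin Fi by (simp add: linear_add linear_cmul)
  also have "\<dots> = (ci*ci + cj*di) *\<^sub>R p i + (ci*cj + cj*dj) *\<^sub>R p j"
    unfolding Fi Fj by (simp add: algebra_simps scaleR_add_left)
  finally have "(ci*ci + cj*di - 1) *\<^sub>R p i + (ci*cj + cj*dj) *\<^sub>R p j = 0"
    by (simp add: algebra_simps scaleR_diff_left)
  then have e: "ci*ci + cj*di - 1 = 0" "ci*cj + cj*dj = 0" using coef2[OF tv ij] by blast+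
  have "cj \<noteq> 0"
  proof
    assume "cj = 0"
    then have "ci * ci = 1" using e by simp
    then have "(ci - 1) * (ci + 1) = 0" by (simp add: algebra_simps)
    then have "ci = 1 \<or> ci = -1" by auto
    then have "ci = 1" using nn by auto
    then show False using excl Fi \<open>cj = 0\<close> by simp
  qed
  moreover have "cj * (ci + dj) = 0" using e(2) by (simp add: algebra_simps)
  ultimately have "ci + dj = 0" by simp
  then have "ci = 0" "dj = 0" using nn by auto
  then have "cj = 1" "di = 1" using s1 s2 by auto
  then show ?thesis using Fi Fj \<open>ci = 0\<close> \<open>dj = 0\<close> by simp
qed

lemma z2_swap:
  assumes tv: "sph_tetra_vertices p" and zs: "z2_symmetric p"
  shows "p 0 \<bullet> p 2 = p 1 \<bullet> p 3 \<and> p 0 \<bullet> p 3 = p 1 \<bullet> p 2"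
proof -
  define W where "W = {p 0 + p 1, p 2 + p 3}"
  define P where "P x = (SOME y. y \<in> span W \<and> (\<forall>w\<in>span W. (x - y) \<bullet> w = 0))" for x
  have Pex: "P x \<in> span W \<and> (\<forall>w\<in>span W. (x - P x) \<bullet> w = 0)" for x
  proof -
    obtain y z where "y \<in> span W" "\<And>w. w \<in> span W \<Longrightarrow> orthogonal z w" "x = y + z"
      using orthogonal_subspace_decomp_exists by blast
    then have "\<exists>y. y \<in> span W \<and> (\<forall>w\<in>span W. (x - y) \<bullet> w = 0)" by (auto simp: orthogonal_def)
    then show ?thesis unfolding P_def by (rule someI_ex)
  qed
  have Puniq: "y = P x" if "y \<in> span W" "\<forall>w\<in>span W. (x - y) \<bullet> w = 0" for x y
  proof -
    have d: "y - P x \<in> span W" using that(1) Pex span_diff by blast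
    have "(y - P x) \<bullet> (y - P x) = (x - P x) \<bullet> (y - P x) - (x - y) \<bullet> (y - P x)"
      by (simp add: inner_diff_left)
    also have "\<dots> = 0" using Pex[of x] that(2) d by auto
    finally show ?thesis by simp
  qed
  define F where "F x = P x - (x - P x)" for x
  have Fspan: "F x = x" if "x \<in> span W" for x
  proof -
    have "x = P x" using Puniq[of x x] that by simp
    then show ?thesis unfolding F_def by simp
  qed
  have Forth: "F x = - x" if "orthogonal x (p 0 + p 1)" "orthogonal x (p 2 + p 3)" for x
  proof -
    have "\<forall>w\<in>span W. (x - 0) \<bullet> w = 0"
    proof
      fix w assume "w \<in> span W"
      then have "orthogonal x w" using that by (intro orthogonal_to_span[of w W x]) (auto simp: W_def)
      then show "(x - 0) \<bullet> w = 0" by (simp add: orthogonal_def)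
    qed
    then have "0 = P x" using Puniq[of 0 x] span_zero by blast
    then show ?thesis unfolding F_def by simp
  qed
  have Padd: "P (x + y) = P x + P y" for x y
  proof -
    have "P x + P y \<in> span W" using Pex span_add by blast
    moreover have "\<forall>w\<in>span W. ((x + y) - (P x + P y)) \<bullet> w = 0"
      using Pex[of x] Pex[of y] by (simp add: inner_diff_left inner_add_left algebra_simps)
    ultimately show ?thesis by (metis Puniq)
  qed
  have Pscale: "P (c *\<^sub>R x) = c *\<^sub>R P x" for c x
  proof -
    have "c *\<^sub>R P x \<in> span W" using Pex span_mul by blast
    moreover have "\<forall>w\<in>span W. (c *\<^sub>R x - c *\<^sub>R P x) \<bullet> w = 0"
      using Pex[of x] by (simp add: inner_diff_left algebra_simps)
    ultimately show ?thesis by (metis Puniq)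
  qed
  have linF: "linear F"
    by (rule linearI) (simp_all add: F_def Padd Pscale algebra_simps)
  have orthP: "orthogonal (x - P x) (p 0 + p 1) \<and> orthogonal (x - P x) (p 2 + p 3)" for x
    using Pex[of x] by (simp add: orthogonal_def W_def span_base)
  have rot: "z2_rotation p = F"
    unfolding z2_rotation_def
  proof (rule the_equality)
    show "linear F \<and> (\<forall>x\<in>span {p 0 + p 1, p 2 + p 3}. F x = x) \<and>
        (\<forall>x. orthogonal x (p 0 + p 1) \<and> orthogonal x (p 2 + p 3) \<longrightarrow> F x = - x)"
      using linF Fspan Forth by (auto simp: W_def)
  next
    fix g assume g: "linear g \<and> (\<forall>x\<in>span {p 0 + p 1, p 2 + p 3}. g x = x) \<and>
        (\<forall>x. orthogonal x (p 0 + p 1) \<and> orthogonal x (p 2 + p 3) \<longrightarrow> g x = - x)"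
    show "g = F"
    proof
      fix x
      have "g x = g (P x) + g (x - P x)" using g linear_add[of g "P x" "x - P x"] by simp
      also have "\<dots> = P x + - (x - P x)" using g orthP[of x] Pex[of x] by (simp add: W_def)
      finally show "g x = F x" by (simp add: F_def)
    qed
  qed
  have FF: "F (F x) = x" for x
  proof -
    have "F (F x) = F (P x) - F (x - P x)" using linear_diff[OF linF, of "P x" "x - P x"] by (simp only: F_def[of x])
    also have "\<dots> = P x + (x - P x)" using Fspan[of "P x"] Pex[of x] Forth[of "x - P x"] orthP[of x] by simp
    finally show ?thesis by simp
  qed
  have Finner: "F x \<bullet> F y = x \<bullet> y" for x y
  proof -
    have o1: "P x \<bullet> (y - P y) = 0" using Pex[of y] Pex[of x] by (simp add: inner_commute)
    have o2: "(x - P x) \<bullet> P y = 0" using Pex[of x] Pex[of y] by simp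
    show ?thesis using inner_aux[OF o1 o2] unfolding F_def by simp
  qed
  have Ffix: "x \<in> span W" if "F x = x" for x
  proof -
    have "x = P x" using that unfolding F_def by (rule vec_half)
    then show ?thesis using Pex by metis
  qed
  have notspan: "p i \<notin> span W" if "i = 0 \<or> i = 2" for i
  proof
    assume "p i \<in> span W"
    then obtain k where "p i - k *\<^sub>R (p 0 + p 1) \<in> span {p 2 + p 3}"
      unfolding W_def using span_breakdown_eq by blast
    then obtain t where t: "p i - k *\<^sub>R (p 0 + p 1) = t *\<^sub>R (p 2 + p 3)"
      by (auto simp: span_singleton)
    show False using that
    proof
      assume "i = 0"
      then have t0: "p 0 - k *\<^sub>R (p 0 + p 1) = t *\<^sub>R (p 2 + p 3)" using t by simp
      have "(1 - k) *\<^sub>R p 0 + (- k) *\<^sub>R p 1 + (- t) *\<^sub>R p 2 + (- t) *\<^sub>R p 3 = (p 0 - k *\<^sub>R (p 0 + p 1)) - t *\<^sub>R (p 2 + p 3)"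
        by (simp add: scaleR_diff_left scaleR_add_right)
      then have "(1 - k) *\<^sub>R p 0 + (- k) *\<^sub>R p 1 + (- t) *\<^sub>R p 2 + (- t) *\<^sub>R p 3 = 0" using t0 by simp
      from lin4[OF tv this] show False by auto
    next
      assume "i = 2"
      then have t0: "p 2 - k *\<^sub>R (p 0 + p 1) = t *\<^sub>R (p 2 + p 3)" using t by simp
      have "(- k) *\<^sub>R p 0 + (- k) *\<^sub>R p 1 + (1 - t) *\<^sub>R p 2 + (- t) *\<^sub>R p 3 = (p 2 - k *\<^sub>R (p 0 + p 1)) - t *\<^sub>R (p 2 + p 3)"
        by (simp add: scaleR_diff_left scaleR_add_right)
      then have "(- k) *\<^sub>R p 0 + (- k) *\<^sub>R p 1 + (1 - t) *\<^sub>R p 2 + (- t) *\<^sub>R p 3 = 0" using t0 by simp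
      from lin4[OF tv this] show False by auto
    qed
  qed
  have Tp: "p i \<in> sph_tetra p" for i
  proof -
    have e: "(\<Sum>j\<in>UNIV. (if j = i then 1 else 0) *\<^sub>R p j) = (\<Sum>j\<in>UNIV. if j = i then p j else 0)"
      by (rule sum.cong) auto
    have "p i = (\<Sum>j\<in>UNIV. (if j = i then 1 else 0) *\<^sub>R p j)"
      unfolding e by simp
    moreover have "norm (p i) = 1" using tv unfolding sph_tetra_vertices_def by auto
    ultimately show ?thesis unfolding sph_tetra_def
      by (intro CollectI conjI exI[of _ "\<lambda>j. if j = i then 1 else 0"]) auto
  qed
  have coefs: "\<exists>c::4\<Rightarrow>real. (\<forall>j. c j \<ge> 0) \<and> F (p i) = c 0 *\<^sub>R p 0 + c 1 *\<^sub>R p 1 + c 2 *\<^sub>R p 2 + c 3 *\<^sub>R p 3" for i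
  proof -
    have "F (p i) \<in> sph_tetra p" using zs Tp[of i] rot unfolding z2_symmetric_def by blast
    then obtain c where "\<forall>j. c j \<ge> 0" "F (p i) = (\<Sum>j\<in>UNIV. c j *\<^sub>R p j)"
      unfolding sph_tetra_def by blast
    moreover have "(\<Sum>j\<in>UNIV. c j *\<^sub>R p j) = c 0 *\<^sub>R p 0 + c 1 *\<^sub>R p 1 + c 2 *\<^sub>R p 2 + c 3 *\<^sub>R p 3"
      by (rule sum4)
    ultimately have "(\<forall>j. c j \<ge> 0) \<and> F (p i) = c 0 *\<^sub>R p 0 + c 1 *\<^sub>R p 1 + c 2 *\<^sub>R p 2 + c 3 *\<^sub>R p 3"
      by simp
    then show ?thesis by blast
  qed
  obtain c :: "4 \<Rightarrow> real" where c: "\<forall>j. c j \<ge> 0" "F (p 0) = c 0 *\<^sub>R p 0 + c 1 *\<^sub>R p 1 + c 2 *\<^sub>R p 2 + c 3 *\<^sub>R p 3"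
    using coefs[of 0] by blast
  obtain d :: "4 \<Rightarrow> real" where d: "\<forall>j. d j \<ge> 0" "F (p 1) = d 0 *\<^sub>R p 0 + d 1 *\<^sub>R p 1 + d 2 *\<^sub>R p 2 + d 3 *\<^sub>R p 3"
    using coefs[of 1] by blast
  obtain e :: "4 \<Rightarrow> real" where e: "\<forall>j. e j \<ge> 0" "F (p 2) = e 0 *\<^sub>R p 0 + e 1 *\<^sub>R p 1 + e 2 *\<^sub>R p 2 + e 3 *\<^sub>R p 3"
    using coefs[of 2] by blast
  obtain g :: "4 \<Rightarrow> real" where g: "\<forall>j. g j \<ge> 0" "F (p 3) = g 0 *\<^sub>R p 0 + g 1 *\<^sub>R p 1 + g 2 *\<^sub>R p 2 + g 3 *\<^sub>R p 3"
    using coefs[of 3] by blast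
  have m1: "F (p 0) + F (p 1) = p 0 + p 1" using Fspan[of "p 0 + p 1"] linF
    by (simp add: W_def span_base linear_add)
  then have "(c 0 + d 0 - 1) *\<^sub>R p 0 + (c 1 + d 1 - 1) *\<^sub>R p 1 + (c 2 + d 2) *\<^sub>R p 2 + (c 3 + d 3) *\<^sub>R p 3 = 0"
    unfolding c(2) d(2) by (simp add: algebra_simps scaleR_add_left scaleR_diff_left)
  then have "c 0 + d 0 - 1 = 0 \<and> c 1 + d 1 - 1 = 0 \<and> c 2 + d 2 = 0 \<and> c 3 + d 3 = 0" by (rule lin4[OF tv])
  then have cd: "c 0 + d 0 = 1" "c 1 + d 1 = 1" "c 2 + d 2 = 0" "c 3 + d 3 = 0" by auto
  then have cd0: "c 2 = 0" "c 3 = 0" "d 2 = 0" "d 3 = 0" using c(1) d(1) by (metis add_nonneg_eq_0_iff)+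
  have m2: "F (p 2) + F (p 3) = p 2 + p 3" using Fspan[of "p 2 + p 3"] linF
    by (simp add: W_def span_base linear_add)
  then have "(e 0 + g 0) *\<^sub>R p 0 + (e 1 + g 1) *\<^sub>R p 1 + (e 2 + g 2 - 1) *\<^sub>R p 2 + (e 3 + g 3 - 1) *\<^sub>R p 3 = 0"
    unfolding e(2) g(2) by (simp add: algebra_simps scaleR_add_left scaleR_diff_left)
  then have "e 0 + g 0 = 0 \<and> e 1 + g 1 = 0 \<and> e 2 + g 2 - 1 = 0 \<and> e 3 + g 3 - 1 = 0" by (rule lin4[OF tv])
  then have eg: "e 0 + g 0 = 0" "e 1 + g 1 = 0" "e 2 + g 2 = 1" "e 3 + g 3 = 1" by auto
  then have eg0: "e 0 = 0" "e 1 = 0" "g 0 = 0" "g 1 = 0" using e(1) g(1) by (metis add_nonneg_eq_0_iff)+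
  have ex0: "F (p 0) \<noteq> p 0" using Ffix notspan[of 0] by blast
  have ex2: "F (p 2) \<noteq> p 2" using Ffix notspan[of 2] by blast
  have s01: "F (p 0) = p 1 \<and> F (p 1) = p 0"
    by (rule swap_lemma[OF tv linF FF ex0, of 1 "c 0" "c 1" "d 0" "d 1"])
       (use c d cd cd0 in auto)
  have s23: "F (p 2) = p 3 \<and> F (p 3) = p 2"
    by (rule swap_lemma[OF tv linF FF ex2, of 3 "e 2" "e 3" "g 2" "g 3"])
       (use e g eg eg0 in auto)
  have "p 1 \<bullet> p 3 = p 0 \<bullet> p 2" using Finner[of "p 0" "p 2"] s01 s23 by simp
  moreover have "p 1 \<bullet> p 2 = p 0 \<bullet> p 3" using Finner[of "p 0" "p 3"] s01 s23 by simp
  ultimately show ?thesis by metis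
qed




definition "C00 (a::real) b c d = 1-b^2-c^2-d^2+2*b*c*d"
definition "C22 (a::real) b c d = 1-a^2-b^2-c^2+2*a*b*c"
definition "C01 (a::real) b c d = -a+a*d^2+2*b*c-b^2*d-c^2*d"
definition "C23 (a::real) b c d = -d+2*b*c+a^2*d-a*c^2-a*b^2"
definition "C02 (a::real) b c d = a*c-a*b*d-b+c*d+b^3-b*c^2"
definition "C03 (a::real) b c d = -a*c*d+a*b+b*d-c-b^2*c+c^3"
definition "Dl (a::real) b c d = C00 a b c d + a*C01 a b c d + b*C02 a b c d + c*C03 a b c d"
lemmas Cdefs = C00_def C22_def C01_def C23_def C02_def C03_def Dl_def

definition "D4 (x00::real) x01 x02 x03 x22 x23 = x00*x22*x22*x00 - x00*x22*x03*x03 - x00*x23*x23*x00 + x00*x23*x03*x02 + x00*x02*x23*x03 - x00*x02*x22*x02 - x03*x03*x22*x00 + x03*x03*x03*x03 + x03*x23*x02*x00 - x03*x23*x03*x01 - x03*x02*x02*x03 + x03*x02*x22*x01 + x02*x03*x23*x00 - x02*x03*x03*x02 - x02*x22*x02*x00 + x02*x22*x03*x01 + x02*x02*x02*x02 - x02*x02*x23*x01 - x01*x03*x23*x03 + x01*x03*x22*x02 + x01*x22*x02*x03 - x01*x22*x22*x01 - x01*x23*x02*x02 + x01*x23*x23*x01"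
definition "D3a (x00::real) x01 x02 x03 x22 x23 = x00*x22*x22 + x03*x23*x02 + x02*x03*x23 - x00*x23*x23 - x03*x03*x22 - x02*x22*x02"
definition "D3b (x00::real) x01 x02 x03 x22 x23 = x00*x00*x22 + x01*x02*x03 + x03*x01*x02 - x00*x02*x02 - x01*x01*x22 - x03*x00*x03"

lemma D4_scale: "D4 (t*x00) (t*x01) (t*x02) (t*x03) (t*x22) (t*x23) = t^4 * D4 x00 x01 x02 x03 x22 x23"
  unfolding D4_def by algebra
lemma D3a_scale: "D3a (t*x00) (t*x01) (t*x02) (t*x03) (t*x22) (t*x23) = t^3 * D3a x00 x01 x02 x03 x22 x23"
  unfolding D3a_def by algebra
lemma D3b_scale: "D3b (t*x00) (t*x01) (t*x02) (t*x03) (t*x22) (t*x23) = t^3 * D3b x00 x01 x02 x03 x22 x23"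
  unfolding D3b_def by algebra

abbreviation "CC f a b c d \<equiv> f (C00 a b c d) (C01 a b c d) (C02 a b c d) (C03 a b c d) (C22 a b c d) (C23 a b c d)"

lemma j4: "CC D4 a b c d = (Dl a b c d)^3" unfolding D4_def Cdefs by algebra
lemma j3a: "CC D3a a b c d = (Dl a b c d)^2" unfolding D3a_def Cdefs by algebra
lemma j3b: "CC D3b a b c d = (Dl a b c d)^2" unfolding D3b_def Cdefs by algebra

lemma jAD: "C00 a b c d * C22 a b c d - C01 a b c d * C23 a b c d = Dl a b c d * (1 - a*d)" unfolding Cdefs by algebra
lemma jB: "C00 a b c d * C22 a b c d - (C02 a b c d)^2 = Dl a b c d * (1 - b^2)" unfolding Cdefs by algebra
lemma jC: "C00 a b c d * C22 a b c d - (C03 a b c d)^2 = Dl a b c d * (1 - c^2)" unfolding Cdefs by algebra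
lemma jA: "(C22 a b c d)^2 - (C23 a b c d)^2 = Dl a b c d * (1 - a^2)" unfolding Cdefs by algebra
lemma jD: "(C00 a b c d)^2 - (C01 a b c d)^2 = Dl a b c d * (1 - d^2)" unfolding Cdefs by algebra
lemma jS: "C01 a b c d * C22 a b c d - C23 a b c d * C00 a b c d = Dl a b c d * (d - a)" unfolding Cdefs by algebra
lemma adj00: "C00 a b c d * 1 + C01 a b c d * a + C02 a b c d * b + C03 a b c d * c = Dl a b c d" unfolding Cdefs by algebra
lemma adj01: "C00 a b c d * a + C01 a b c d * 1 + C02 a b c d * c + C03 a b c d * b = 0" unfolding Cdefs by algebra
lemma adj02: "C00 a b c d * b + C01 a b c d * c + C02 a b c d * 1 + C03 a b c d * d = 0" unfolding Cdefs by algebra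
lemma adj03: "C00 a b c d * c + C01 a b c d * b + C02 a b c d * d + C03 a b c d * 1 = 0" unfolding Cdefs by algebra
lemma adj10: "C01 a b c d * 1 + C00 a b c d * a + C03 a b c d * b + C02 a b c d * c = 0" unfolding Cdefs by algebra
lemma adj11: "C01 a b c d * a + C00 a b c d * 1 + C03 a b c d * c + C02 a b c d * b = Dl a b c d" unfolding Cdefs by algebra
lemma adj12: "C01 a b c d * b + C00 a b c d * c + C03 a b c d * 1 + C02 a b c d * d = 0" unfolding Cdefs by algebra
lemma adj13: "C01 a b c d * c + C00 a b c d * b + C03 a b c d * d + C02 a b c d * 1 = 0" unfolding Cdefs by algebra
lemma adj20: "C02 a b c d * 1 + C03 a b c d * a + C22 a b c d * b + C23 a b c d * c = 0" unfolding Cdefs by algebra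
lemma adj21: "C02 a b c d * a + C03 a b c d * 1 + C22 a b c d * c + C23 a b c d * b = 0" unfolding Cdefs by algebra
lemma adj22: "C02 a b c d * b + C03 a b c d * c + C22 a b c d * 1 + C23 a b c d * d = Dl a b c d" unfolding Cdefs by algebra
lemma adj23: "C02 a b c d * c + C03 a b c d * b + C22 a b c d * d + C23 a b c d * 1 = 0" unfolding Cdefs by algebra
lemma adj30: "C03 a b c d * 1 + C02 a b c d * a + C23 a b c d * b + C22 a b c d * c = 0" unfolding Cdefs by algebra
lemma adj31: "C03 a b c d * a + C02 a b c d * 1 + C23 a b c d * c + C22 a b c d * b = 0" unfolding Cdefs by algebra
lemma adj32: "C03 a b c d * b + C02 a b c d * c + C23 a b c d * 1 + C22 a b c d * d = 0" unfolding Cdefs by algebra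
lemma adj33: "C03 a b c d * c + C02 a b c d * b + C23 a b c d * d + C22 a b c d * 1 = Dl a b c d" unfolding Cdefs by algebra






lemma ratio_helper:
  fixes X Dt t q :: real
  assumes X: "X > 0" and D: "Dt > 0" and e: "1 - t^2 = Dt*(1-q^2)/X" and q: "q^2 < 1"
  shows "sqrt (X/Dt) = sqrt (1-q^2) / sqrt (1-t^2)"
proof -
  have q1: "sqrt (1 - q^2) > 0" using q by simp
  have "sqrt (1-t^2) = sqrt (Dt/X) * sqrt (1-q^2)" unfolding e
    by (simp add: real_sqrt_mult[symmetric] field_simps)
  moreover have "sqrt (Dt/X) > 0" using X D by simp
  ultimately have "sqrt (1-q^2) / sqrt (1-t^2) = 1 / sqrt (Dt/X)" using q1 by simp
  also have "\<dots> = sqrt (X/Dt)" by (simp add: real_sqrt_divide)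
  finally show ?thesis by simp
qed

lemma sin_arccos_neg_sq: "t^2 \<le> 1 \<Longrightarrow> sin (arccos (- t)) = sqrt (1 - t^2)"
  using sin_arccos_abs[of "-t"] by (simp add: abs_square_le_1)

lemma sinA_form:
  fixes x22 x23 Dt a :: real
  assumes x: "x22 > 0" and D: "Dt > 0" and e: "x22^2 - x23^2 = Dt*(1-a^2)" and a: "a^2 < 1"
  shows "(x23/x22)^2 < 1" and "sin (arccos (- (x23/x22))) = sqrt Dt * sqrt (1 - a^2) / x22"
proof -
  have e2: "1 - (x23/x22)^2 = Dt*(1-a^2)/x22^2" using e x by (simp add: field_simps power_divide)
  moreover have "Dt*(1-a^2)/x22^2 > 0" using D a x by simp
  ultimately show "(x23/x22)^2 < 1" by simp
  then have "sin (arccos (- (x23/x22))) = sqrt (1 - (x23/x22)^2)" by (intro sin_arccos_neg_sq) simp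
  also have "\<dots> = sqrt Dt * sqrt (1 - a^2) / x22" unfolding e2 using x
    by (simp add: real_sqrt_mult real_sqrt_divide)
  finally show "sin (arccos (- (x23/x22))) = sqrt Dt * sqrt (1 - a^2) / x22" .
qed

lemma trig_main:
  fixes a d x00 x22 x01 x23 Dt :: real
  assumes D: "Dt > 0" and x0: "x00 > 0" and x2: "x22 > 0" and a: "a^2 < 1" and d: "d^2 < 1"
    and jA: "x22^2 - x23^2 = Dt*(1-a^2)" and jD: "x00^2 - x01^2 = Dt*(1-d^2)"
    and jAD: "x00*x22 - x01*x23 = Dt*(1-a*d)" and jS: "x01*x22 - x23*x00 = Dt*(d-a)"
  defines "lA \<equiv> arccos a" and "lD \<equiv> arccos d" and "A \<equiv> arccos (- (x23/x22))" and "D \<equiv> arccos (- (x01/x00))"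
    and "u \<equiv> sqrt (x00*x22/Dt)"
  shows "u = sin ((lA + lD)/2) / sin ((A + D)/2)"
    and "A \<noteq> D \<longrightarrow> u = sin ((lA - lD)/2) / sin ((D - A)/2)"
proof -
  have tA: "(x23/x22)^2 < 1" and sA: "sin A = sqrt Dt * sqrt (1 - a^2) / x22"
    using sinA_form[OF x2 D jA a] unfolding A_def by auto
  have tD: "(x01/x00)^2 < 1" and sD: "sin D = sqrt Dt * sqrt (1 - d^2) / x00"
    using sinA_form[OF x0 D jD d] unfolding D_def by auto
  have tA': "- 1 < x23/x22 \<and> x23/x22 < 1" using tA unfolding abs_square_less_1 abs_less_iff by linarith
  have tD': "- 1 < x01/x00 \<and> x01/x00 < 1" using tD unfolding abs_square_less_1 abs_less_iff by linarith
  have cA: "cos A = - (x23/x22)" unfolding A_def using tA' by (intro cos_arccos) auto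
  have cD: "cos D = - (x01/x00)" unfolding D_def using tD' by (intro cos_arccos) auto
  have a1: "\<bar>a\<bar> \<le> 1" and d1: "\<bar>d\<bar> \<le> 1" using a d by (simp_all add: abs_square_less_1 less_imp_le)
  have clA: "cos lA = a" and slA: "sin lA = sqrt (1 - a^2)" unfolding lA_def using a1 by (simp_all add: abs_le_iff sin_arccos_abs)
  have clD: "cos lD = d" and slD: "sin lD = sqrt (1 - d^2)" unfolding lD_def using d1 by (simp_all add: abs_le_iff sin_arccos_abs)
  have Ab: "0 < A \<and> A < pi" unfolding A_def using tA' by (intro arccos_lt_bounded) auto
  have Db: "0 < D \<and> D < pi" unfolding D_def using tD' by (intro arccos_lt_bounded) auto
  have lAb: "0 \<le> lA \<and> lA \<le> pi" unfolding lA_def using a1 by (intro arccos_bounded) (auto simp: abs_le_iff)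
  have lDb: "0 \<le> lD \<and> lD \<le> pi" unfolding lD_def using d1 by (intro arccos_bounded) (auto simp: abs_le_iff)
  define qa where "qa = sqrt (1 - a^2)"
  define qd where "qd = sqrt (1 - d^2)"
  have sDt: "sqrt Dt * sqrt Dt = Dt" using D by simp
  have nnX: "x00*x22/Dt \<ge> 0" using D x0 x2 by (auto intro!: divide_nonneg_pos mult_nonneg_nonneg)
  then have u2: "u^2 = x00*x22/Dt" unfolding u_def by (rule real_sqrt_pow2)
  have u0: "u \<ge> 0" unfolding u_def using nnX by simp
  have sAsD: "sin A * sin D = Dt * qa * qd / (x00*x22)" unfolding sA sD qa_def qd_def using sDt
    by (simp add: field_simps)
  have key1: "(x00*x22/Dt) * (1 - (x23/x22)*(x01/x00) + Dt * qa * qd / (x00*x22)) = 1 - a*d + qa*qd"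
  proof -
    have "(x00*x22/Dt) * (1 - (x23/x22)*(x01/x00) + Dt * qa * qd / (x00*x22))
        = (x00*x22 - x01*x23)/Dt + qa*qd" using D x0 x2 by (simp add: field_simps)
    also have "\<dots> = 1 - a*d + qa*qd" using jAD D by simp
    finally show ?thesis .
  qed
  have key2: "(x00*x22/Dt) * (1 - (x23/x22)*(x01/x00) - Dt * qa * qd / (x00*x22)) = 1 - a*d - qa*qd"
  proof -
    have "(x00*x22/Dt) * (1 - (x23/x22)*(x01/x00) - Dt * qa * qd / (x00*x22))
        = (x00*x22 - x01*x23)/Dt - qa*qd" using D x0 x2 by (simp add: field_simps)
    also have "\<dots> = 1 - a*d - qa*qd" using jAD D by simp
    finally show ?thesis .
  qed
  have S1sq: "sin ((lA + lD)/2)^2 = (1 - a*d + qa*qd)/2"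
    unfolding half_sin_sq cos_add clA clD slA slD qa_def qd_def by simp
  have S2sq: "sin ((A + D)/2)^2 = (1 - (x23/x22)*(x01/x00) + Dt * qa * qd / (x00*x22))/2"
    unfolding half_sin_sq cos_add cA cD sAsD by simp
  have S3sq: "sin ((lA - lD)/2)^2 = (1 - a*d - qa*qd)/2"
    unfolding half_sin_sq cos_diff clA clD slA slD qa_def qd_def by simp
  have S4sq: "sin ((D - A)/2)^2 = (1 - (x23/x22)*(x01/x00) - Dt * qa * qd / (x00*x22))/2"
    unfolding half_sin_sq cos_diff cA cD using sAsD by (simp add: mult.commute)
  have sq1: "sin ((lA + lD)/2)^2 = (u * sin ((A + D)/2))^2"
    unfolding power_mult_distrib u2 S1sq S2sq using key1 by simp
  have sq2: "sin ((lA - lD)/2)^2 = (u * sin ((D - A)/2))^2"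
    unfolding power_mult_distrib u2 S3sq S4sq using key2 by simp
  have S1nn: "sin ((lA + lD)/2) \<ge> 0" using lAb lDb by (intro sin_ge_zero) auto
  have S2pos: "sin ((A + D)/2) > 0" using Ab Db by (intro sin_gt_zero) auto
  have "sin ((lA + lD)/2) = u * sin ((A + D)/2)"
    using sq1 S1nn S2pos u0 by (simp add: power2_eq_iff_nonneg)
  then show "u = sin ((lA + lD)/2) / sin ((A + D)/2)" using S2pos by simp
  show "A \<noteq> D \<longrightarrow> u = sin ((lA - lD)/2) / sin ((D - A)/2)"
  proof
    assume AD: "A \<noteq> D"
    have "a \<noteq> d"
    proof
      assume "a = d"
      then have "x01*x22 = x23*x00" using jS by simp
      then have "x01/x00 = x23/x22" using x0 x2 by (simp add: field_simps)
      then show False using AD unfolding A_def D_def by simp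
    qed
    then consider "a < d" | "d < a" by linarith
    then have "sin ((lA - lD)/2) = u * sin ((D - A)/2) \<and> sin ((D - A)/2) \<noteq> 0"
    proof cases
      case 1
      have "lD < lA" unfolding lA_def lD_def using 1 a1 d1 by (intro arccos_less_arccos) (auto simp: abs_le_iff)
      then have S3: "sin ((lA - lD)/2) > 0" using lAb lDb by (intro sin_gt_zero) auto
      have "Dt*(d-a) > 0" using D 1 by simp
      then have "x23*x00 < x01*x22" using jS by linarith
      then have "x23/x22 < x01/x00" using x0 x2 by (simp add: field_simps)
      then have "A < D" unfolding A_def D_def using tA' tD'
        by (intro arccos_less_arccos) auto
      then have S4: "sin ((D - A)/2) > 0" using Ab Db by (intro sin_gt_zero) auto
      show ?thesis using sq2 S3 S4 u0 by (simp add: power2_eq_iff_nonneg)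
    next
      case 2
      have "lA < lD" unfolding lA_def lD_def using 2 a1 d1 by (intro arccos_less_arccos) (auto simp: abs_le_iff)
      then have S3: "sin ((lD - lA)/2) > 0" using lAb lDb by (intro sin_gt_zero) auto
      have "Dt*(d-a) < 0" using D 2 by (simp add: mult_pos_neg)
      then have "x01*x22 < x23*x00" using jS by linarith
      then have "x01/x00 < x23/x22" using x0 x2 by (simp add: field_simps)
      then have "D < A" unfolding A_def D_def using tA' tD'
        by (intro arccos_less_arccos) auto
      then have S4: "sin ((A - D)/2) > 0" using Ab Db by (intro sin_gt_zero) auto
      have e3: "sin ((lA - lD)/2) = - sin ((lD - lA)/2)" by (metis minus_diff_eq minus_divide_left sin_minus)
      have e4: "sin ((D - A)/2) = - sin ((A - D)/2)" by (metis minus_diff_eq minus_divide_left sin_minus)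
      have "sin ((lD - lA)/2) = u * sin ((A - D)/2)"
        using sq2 S3 S4 u0 unfolding e3 e4 by (simp add: power2_eq_iff_nonneg)
      then show ?thesis using e3 e4 S4 by simp
    qed
    then show "u = sin ((lA - lD)/2) / sin ((D - A)/2)" by simp
  qed
qed


lemma all4: "(\<forall>j::4. P j) \<longleftrightarrow> P 0 \<and> P 1 \<and> P 2 \<and> P 3"
  using forall_4[of P] four_eq0 by auto

lemma cases4: "(j::4) = 0 \<or> j = 1 \<or> j = 2 \<or> j = 3"
  using exhaust_4[of j] four_eq0 by auto

lemma strict_cs:
  assumes tv: "sph_tetra_vertices p" and ij: "i \<noteq> j"
  shows "(p i \<bullet> p j)^2 < 1"
proof -
  have n: "norm (p i) = 1" "norm (p j) = 1" using tv unfolding sph_tetra_vertices_def by auto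
  have ii: "p i \<bullet> p i = 1" "p j \<bullet> p j = 1" using n by (simp_all add: dot_square_norm)
  define t where "t = p i \<bullet> p j"
  have le: "\<bar>t\<bar> \<le> 1" unfolding t_def using inner_le1 n by blast
  have "\<bar>t\<bar> \<noteq> 1"
  proof
    assume h: "\<bar>t\<bar> = 1"
    then have t2: "t * t = 1" by (metis abs_mult_self_eq mult_1)
    have "(p i - t *\<^sub>R p j) \<bullet> (p i - t *\<^sub>R p j) = 1 - 2 * t * t + t * t"
      using ii by (simp add: inner_diff_left inner_diff_right t_def inner_commute algebra_simps)
    also have "\<dots> = 0" using t2 by simp
    finally have "p i - t *\<^sub>R p j = 0" by simp
    then have "1 *\<^sub>R p i + (- t) *\<^sub>R p j = 0" by simp
    from coef2[OF tv ij this] show False by simp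
  qed
  then have "\<bar>t\<bar> < 1" using le by simp
  then show ?thesis unfolding t_def by (simp add: abs_square_less_1)
qed

theorem proposition1:
  fixes p :: "4 \<Rightarrow> real^4"
  assumes "sph_tetra_vertices p" and "z2_symmetric p"
  defines "lA \<equiv> edge_len p 0 1" and "lB \<equiv> edge_len p 0 2" and "lC \<equiv> edge_len p 0 3"
      and "lD \<equiv> edge_len p 2 3"
      and "A \<equiv> dihedral p 2 3" and "B \<equiv> dihedral p 1 3" and "C \<equiv> dihedral p 1 2"
      and "D \<equiv> dihedral p 0 1"
      and "u \<equiv> sqrt (cofactor4 (edge_matrix p) 0 0 * cofactor4 (edge_matrix p) 2 2
                      / det (edge_matrix p))"
      and "v \<equiv> sqrt (cofactor4 (gram_matrix p) 0 0 * cofactor4 (gram_matrix p) 2 2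
                      / det (gram_matrix p))"
  shows "u = sin ((lA + lD) / 2) / sin ((A + D) / 2)
       \<and> (A \<noteq> D \<longrightarrow> u = sin ((lA - lD) / 2) / sin ((D - A) / 2))
       \<and> u = sin lB / sin B
       \<and> u = sin lC / sin C
       \<and> u = inverse v"
proof -
  note tv = assms(1)
  have nrm: "\<And>i. norm (p i) = 1" using tv unfolding sph_tetra_vertices_def by auto
  have sw: "p 0 \<bullet> p 2 = p 1 \<bullet> p 3 \<and> p 0 \<bullet> p 3 = p 1 \<bullet> p 2" using z2_swap[OF assms(1,2)] .
  define a where "a = p 0 \<bullet> p 1"
  define b where "b = p 0 \<bullet> p 2"
  define c where "c = p 0 \<bullet> p 3"
  define d where "d = p 2 \<bullet> p 3"
  have ip: "p 0 \<bullet> p 0 = 1" "p 1 \<bullet> p 1 = 1" "p 2 \<bullet> p 2 = 1" "p 3 \<bullet> p 3 = 1"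
     "p 0 \<bullet> p 1 = a" "p 1 \<bullet> p 0 = a" "p 0 \<bullet> p 2 = b" "p 2 \<bullet> p 0 = b"
     "p 0 \<bullet> p 3 = c" "p 3 \<bullet> p 0 = c" "p 1 \<bullet> p 2 = c" "p 2 \<bullet> p 1 = c"
     "p 1 \<bullet> p 3 = b" "p 3 \<bullet> p 1 = b" "p 2 \<bullet> p 3 = d" "p 3 \<bullet> p 2 = d"
    using nrm sw by (simp_all add: a_def b_def c_def d_def inner_commute dot_square_norm)
  have a2: "a^2 < 1" unfolding a_def by (rule strict_cs[OF tv]) simp
  have b2: "b^2 < 1" unfolding b_def by (rule strict_cs[OF tv]) simp
  have c2: "c^2 < 1" unfolding c_def by (rule strict_cs[OF tv]) simp
  have d2: "d^2 < 1" unfolding d_def by (rule strict_cs[OF tv]) simp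
  define x00 where "x00 = C00 a b c d"
  define x01 where "x01 = C01 a b c d"
  define x02 where "x02 = C02 a b c d"
  define x03 where "x03 = C03 a b c d"
  define x22 where "x22 = C22 a b c d"
  define x23 where "x23 = C23 a b c d"
  define Dt where "Dt = Dl a b c d"
  note xdefs = x00_def x01_def x02_def x03_def x22_def x23_def Dt_def
  have EM: "edge_matrix p = (\<chi> i j. p i \<bullet> p j)" by (rule edge_matrix_eq[OF tv])
  have detE: "det (edge_matrix p) = Dt"
    unfolding EM det4 by (simp add: ip Dt_def Cdefs; algebra)
  have cofE0: "cofactor4 (edge_matrix p) 0 0 = x00"
    unfolding EM cof00 by (simp add: ip x00_def Cdefs; algebra)
  have cofE2: "cofactor4 (edge_matrix p) 2 2 = x22"
    unfolding EM cof22 by (simp add: ip x22_def Cdefs; algebra)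
  have Dpos: "Dt > 0" using gram_pos[OF tv] detE by simp
  have uu: "u = sqrt (x00 * x22 / Dt)" unfolding u_def cofE0 cofE2 detE ..
  define w0 where "w0 = - (x00 *\<^sub>R p 0 + x01 *\<^sub>R p 1 + x02 *\<^sub>R p 2 + x03 *\<^sub>R p 3)"
  define w1 where "w1 = - (x01 *\<^sub>R p 0 + x00 *\<^sub>R p 1 + x03 *\<^sub>R p 2 + x02 *\<^sub>R p 3)"
  define w2 where "w2 = - (x02 *\<^sub>R p 0 + x03 *\<^sub>R p 1 + x22 *\<^sub>R p 2 + x23 *\<^sub>R p 3)"
  define w3 where "w3 = - (x03 *\<^sub>R p 0 + x02 *\<^sub>R p 1 + x23 *\<^sub>R p 2 + x22 *\<^sub>R p 3)"
  have w0y: "\<And>y. w0 \<bullet> y = - (x00 * (p 0 \<bullet> y) + x01 * (p 1 \<bullet> y) + x02 * (p 2 \<bullet> y) + x03 * (p 3 \<bullet> y))"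
    unfolding w0_def by (simp add: inner_add_left inner_diff_left)
  have w1y: "\<And>y. w1 \<bullet> y = - (x01 * (p 0 \<bullet> y) + x00 * (p 1 \<bullet> y) + x03 * (p 2 \<bullet> y) + x02 * (p 3 \<bullet> y))"
    unfolding w1_def by (simp add: inner_add_left inner_diff_left)
  have w2y: "\<And>y. w2 \<bullet> y = - (x02 * (p 0 \<bullet> y) + x03 * (p 1 \<bullet> y) + x22 * (p 2 \<bullet> y) + x23 * (p 3 \<bullet> y))"
    unfolding w2_def by (simp add: inner_add_left inner_diff_left)
  have w3y: "\<And>y. w3 \<bullet> y = - (x03 * (p 0 \<bullet> y) + x02 * (p 1 \<bullet> y) + x23 * (p 2 \<bullet> y) + x22 * (p 3 \<bullet> y))"
    unfolding w3_def by (simp add: inner_add_left inner_diff_left)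
  have wp: "w0 \<bullet> p 0 = - Dt" "w0 \<bullet> p 1 = 0" "w0 \<bullet> p 2 = 0" "w0 \<bullet> p 3 = 0"
    "w1 \<bullet> p 0 = 0" "w1 \<bullet> p 1 = - Dt" "w1 \<bullet> p 2 = 0" "w1 \<bullet> p 3 = 0"
    "w2 \<bullet> p 0 = 0" "w2 \<bullet> p 1 = 0" "w2 \<bullet> p 2 = - Dt" "w2 \<bullet> p 3 = 0"
    "w3 \<bullet> p 0 = 0" "w3 \<bullet> p 1 = 0" "w3 \<bullet> p 2 = 0" "w3 \<bullet> p 3 = - Dt"
    by (simp_all add: w0y w1y w2y w3y ip xdefs Cdefs; algebra)+
  have pw: "p 0 \<bullet> w0 = - Dt" "p 1 \<bullet> w0 = 0" "p 2 \<bullet> w0 = 0" "p 3 \<bullet> w0 = 0"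
    "p 0 \<bullet> w1 = 0" "p 1 \<bullet> w1 = - Dt" "p 2 \<bullet> w1 = 0" "p 3 \<bullet> w1 = 0"
    "p 0 \<bullet> w2 = 0" "p 1 \<bullet> w2 = 0" "p 2 \<bullet> w2 = - Dt" "p 3 \<bullet> w2 = 0"
    "p 0 \<bullet> w3 = 0" "p 1 \<bullet> w3 = 0" "p 2 \<bullet> w3 = 0" "p 3 \<bullet> w3 = - Dt"
    using wp by (simp_all add: inner_commute)
  have ww: "w0 \<bullet> w0 = Dt * x00" "w0 \<bullet> w1 = Dt * x01" "w0 \<bullet> w2 = Dt * x02" "w0 \<bullet> w3 = Dt * x03"
    "w1 \<bullet> w0 = Dt * x01" "w1 \<bullet> w1 = Dt * x00" "w1 \<bullet> w2 = Dt * x03" "w1 \<bullet> w3 = Dt * x02"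
    "w2 \<bullet> w0 = Dt * x02" "w2 \<bullet> w1 = Dt * x03" "w2 \<bullet> w2 = Dt * x22" "w2 \<bullet> w3 = Dt * x23"
    "w3 \<bullet> w0 = Dt * x03" "w3 \<bullet> w1 = Dt * x02" "w3 \<bullet> w2 = Dt * x23" "w3 \<bullet> w3 = Dt * x22"
    by (simp_all add: w0y w1y w2y w3y pw algebra_simps)
  have w0nz: "w0 \<noteq> 0" using wp(1) Dpos by auto
  have w2nz: "w2 \<noteq> 0" using wp(11) Dpos by auto
  have "w0 \<bullet> w0 > 0" using w0nz by simp
  then have x0pos: "x00 > 0" using ww(1) Dpos by (simp add: zero_less_mult_iff)
  have "w2 \<bullet> w2 > 0" using w2nz by simp
  then have x2pos: "x22 > 0" using ww(11) Dpos by (simp add: zero_less_mult_iff)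
  define s0 where "s0 = sqrt (Dt * x00)"
  define s2 where "s2 = sqrt (Dt * x22)"
  have s0pos: "s0 > 0" and s2pos: "s2 > 0" unfolding s0_def s2_def using Dpos x0pos x2pos by simp_all
  have s0sq: "s0^2 = Dt * x00" unfolding s0_def using Dpos x0pos by simp
  have s2sq: "s2^2 = Dt * x22" unfolding s2_def using Dpos x2pos by simp
  have nw: "norm w0 = s0" "norm w1 = s0" "norm w2 = s2" "norm w3 = s2"
    unfolding s0_def s2_def by (simp_all add: norm_eq_sqrt_inner ww)
  define W where "W i = (if i = 0 then w0 else if i = 1 then w1 else if i = 2 then w2 else w3)" for i :: 4
  have Wv: "W 0 = w0" "W 1 = w1" "W 2 = w2" "W 3 = w3" by (simp_all add: W_def)
  have on0: "outer_normal p 0 = (1 / norm w0) *\<^sub>R w0"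
  proof (rule outer_normal_char[OF tv])
    fix j :: 4 assume "j \<noteq> 0" then show "w0 \<bullet> p j = 0" using cases4[of j] wp by auto
  next show "w0 \<bullet> p 0 < 0" using wp Dpos by simp
  qed
  have on1: "outer_normal p 1 = (1 / norm w1) *\<^sub>R w1"
  proof (rule outer_normal_char[OF tv])
    fix j :: 4 assume "j \<noteq> 1" then show "w1 \<bullet> p j = 0" using cases4[of j] wp by auto
  next show "w1 \<bullet> p 1 < 0" using wp Dpos by simp
  qed
  have on2: "outer_normal p 2 = (1 / norm w2) *\<^sub>R w2"
  proof (rule outer_normal_char[OF tv])
    fix j :: 4 assume "j \<noteq> 2" then show "w2 \<bullet> p j = 0" using cases4[of j] wp by auto
  next show "w2 \<bullet> p 2 < 0" using wp Dpos by simp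
  qed
  have on3: "outer_normal p 3 = (1 / norm w3) *\<^sub>R w3"
  proof (rule outer_normal_char[OF tv])
    fix j :: 4 assume "j \<noteq> 3" then show "w3 \<bullet> p j = 0" using cases4[of j] wp by auto
  next show "w3 \<bullet> p 3 < 0" using wp Dpos by simp
  qed
  have on: "outer_normal p i = (1 / norm (W i)) *\<^sub>R W i" for i
    using cases4[of i] on0 on1 on2 on3 Wv by auto
  have Wnz: "norm (W i) \<noteq> 0" for i
    using cases4[of i] Wv nw s0pos s2pos by auto
  have nN: "norm (outer_normal p i) = 1" for i
    unfolding on using Wnz[of i] by simp
  have NN: "outer_normal p i \<bullet> outer_normal p j = (W i \<bullet> W j) / (norm (W i) * norm (W j))" for i j
    unfolding on by simp
  have GM: "gram_matrix p = (\<chi> i j. (W i \<bullet> W j) / (norm (W i) * norm (W j)))"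
    unfolding gram_matrix_eq[OF nN] NN ..
  have dWW: "det (\<chi> i j. W i \<bullet> W j) = Dt^7"
  proof -
    have "det (\<chi> i j. W i \<bullet> W j) = D4 (Dt*x00) (Dt*x01) (Dt*x02) (Dt*x03) (Dt*x22) (Dt*x23)"
      unfolding det4 D4_def by (simp add: Wv ww)
    also have "\<dots> = Dt^4 * D4 x00 x01 x02 x03 x22 x23" by (rule D4_scale)
    also have "D4 x00 x01 x02 x03 x22 x23 = Dt^3" using j4[of a b c d] by (simp add: xdefs)
    finally show ?thesis by simp
  qed
  have cWW0: "cofactor4 (\<chi> i j. W i \<bullet> W j) 0 0 = Dt^5"
  proof -
    have "cofactor4 (\<chi> i j. W i \<bullet> W j) 0 0 = D3a (Dt*x00) (Dt*x01) (Dt*x02) (Dt*x03) (Dt*x22) (Dt*x23)"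
      unfolding cof00 D3a_def by (simp add: Wv ww)
    also have "\<dots> = Dt^3 * D3a x00 x01 x02 x03 x22 x23" by (rule D3a_scale)
    also have "D3a x00 x01 x02 x03 x22 x23 = Dt^2" using j3a[of a b c d] by (simp add: xdefs)
    finally show ?thesis by simp
  qed
  have cWW2: "cofactor4 (\<chi> i j. W i \<bullet> W j) 2 2 = Dt^5"
  proof -
    have "cofactor4 (\<chi> i j. W i \<bullet> W j) 2 2 = D3b (Dt*x00) (Dt*x01) (Dt*x02) (Dt*x03) (Dt*x22) (Dt*x23)"
      unfolding cof22 D3b_def by (simp add: Wv ww)
    also have "\<dots> = Dt^3 * D3b x00 x01 x02 x03 x22 x23" by (rule D3b_scale)
    also have "D3b x00 x01 x02 x03 x22 x23 = Dt^2" using j3b[of a b c d] by (simp add: xdefs)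
    finally show ?thesis by simp
  qed
  have detG: "det (gram_matrix p) = Dt^7 / ((Dt*x00)^2 * (Dt*x22)^2)"
  proof -
    have "det (gram_matrix p) = det (\<chi> i j. W i \<bullet> W j) / (norm (W 0) * norm (W 1) * norm (W 2) * norm (W 3))^2"
      unfolding GM using det4_scaled[where y = "\<lambda>i. norm (W i)" and e = "\<lambda>i j. W i \<bullet> W j"] Wnz by simp
    also have "(norm (W 0) * norm (W 1) * norm (W 2) * norm (W 3))^2 = (Dt*x00)^2 * (Dt*x22)^2"
      unfolding Wv nw power_mult_distrib s0sq s2sq by (simp add: power2_eq_square)
    finally show ?thesis using dWW by simp
  qed
  have cG0: "cofactor4 (gram_matrix p) 0 0 = Dt^5 / ((Dt*x00) * (Dt*x22)^2)"
  proof -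
    have "cofactor4 (gram_matrix p) 0 0 = cofactor4 (\<chi> i j. W i \<bullet> W j) 0 0 / (norm (W 1) * norm (W 2) * norm (W 3))^2"
      unfolding GM using cof00_scaled[where y = "\<lambda>i. norm (W i)" and e = "\<lambda>i j. W i \<bullet> W j"] Wnz by simp
    also have "(norm (W 1) * norm (W 2) * norm (W 3))^2 = (Dt*x00) * (Dt*x22)^2"
      unfolding Wv nw power_mult_distrib s0sq s2sq by (simp add: power2_eq_square)
    finally show ?thesis using cWW0 by simp
  qed
  have cG2: "cofactor4 (gram_matrix p) 2 2 = Dt^5 / ((Dt*x00)^2 * (Dt*x22))"
  proof -
    have "cofactor4 (gram_matrix p) 2 2 = cofactor4 (\<chi> i j. W i \<bullet> W j) 2 2 / (norm (W 0) * norm (W 1) * norm (W 3))^2"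
      unfolding GM using cof22_scaled[where y = "\<lambda>i. norm (W i)" and e = "\<lambda>i j. W i \<bullet> W j"] Wnz by simp
    also have "(norm (W 0) * norm (W 1) * norm (W 3))^2 = (Dt*x00)^2 * (Dt*x22)"
      unfolding Wv nw power_mult_distrib s0sq s2sq by (simp add: power2_eq_square)
    finally show ?thesis using cWW2 by simp
  qed
  have vv: "v = sqrt (Dt / (x00 * x22))"
  proof -
    have "cofactor4 (gram_matrix p) 0 0 * cofactor4 (gram_matrix p) 2 2 / det (gram_matrix p) = Dt / (x00 * x22)"
      unfolding cG0 cG2 detG using Dpos x0pos x2pos by (simp add: field_simps power2_eq_square eval_nat_numeral)
    then show ?thesis unfolding v_def by simp
  qed
  have uv: "u = inverse v"
    unfolding uu vv using Dpos x0pos x2pos by (simp add: real_sqrt_inverse[symmetric])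
  have ss: "s0 * s2 = Dt * sqrt (x00 * x22)"
  proof -
    have "s0 * s2 = sqrt ((Dt * Dt) * (x00 * x22))"
      unfolding s0_def s2_def real_sqrt_mult[symmetric] by (simp only: mult.assoc mult.commute mult.left_commute)
    also have "\<dots> = \<bar>Dt\<bar> * sqrt (x00 * x22)" by (subst real_sqrt_mult) simp
    finally show ?thesis using Dpos by simp
  qed
  have sqpos: "sqrt (x00 * x22) > 0" using x0pos x2pos by simp
  have Aeq: "A = arccos (- (x23 / x22))"
    unfolding A_def dihedral_def NN Wv nw ww using s2sq Dpos
    by (simp add: power2_eq_square)
  have Deq: "D = arccos (- (x01 / x00))"
    unfolding D_def dihedral_def NN Wv nw ww using s0sq Dpos
    by (simp add: power2_eq_square)
  have Beq: "B = arccos (- (x02 / sqrt (x00 * x22)))"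
    unfolding B_def dihedral_def NN Wv nw ww ss using Dpos by simp
  have Ceq: "C = arccos (- (x03 / sqrt (x00 * x22)))"
    unfolding C_def dihedral_def NN Wv nw ww ss using Dpos by simp
  have lAeq: "lA = arccos a" unfolding lA_def edge_len_def a_def ..
  have lBeq: "lB = arccos b" unfolding lB_def edge_len_def b_def ..
  have lCeq: "lC = arccos c" unfolding lC_def edge_len_def c_def ..
  have lDeq: "lD = arccos d" unfolding lD_def edge_len_def d_def ..
  have jA': "x22^2 - x23^2 = Dt*(1-a^2)" using jA[of a b c d] by (simp add: xdefs)
  have jD': "x00^2 - x01^2 = Dt*(1-d^2)" using jD[of a b c d] by (simp add: xdefs)
  have jAD': "x00*x22 - x01*x23 = Dt*(1-a*d)" using jAD[of a b c d] by (simp add: xdefs)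
  have jS': "x01*x22 - x23*x00 = Dt*(d-a)" using jS[of a b c d] by (simp add: xdefs)
  have jB': "x00*x22 - x02^2 = Dt*(1-b^2)" using jB[of a b c d] by (simp add: xdefs)
  have jC': "x00*x22 - x03^2 = Dt*(1-c^2)" using jC[of a b c d] by (simp add: xdefs)
  have T: "u = sin ((lA + lD)/2) / sin ((A + D)/2)"
       "A \<noteq> D \<longrightarrow> u = sin ((lA - lD)/2) / sin ((D - A)/2)"
    unfolding uu lAeq lDeq Aeq Deq
    using trig_main[OF Dpos x0pos x2pos a2 d2 jA' jD' jAD' jS'] by auto
  have X: "x00 * x22 > 0" using x0pos x2pos by simp
  have sB: "u = sin lB / sin B"
  proof -
    have sq: "(sqrt (x00 * x22))^2 = x00 * x22" using X by simp
    have "1 - (x02 / sqrt (x00 * x22))^2 = 1 - x02^2 / (x00 * x22)" by (simp add: power_divide sq)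
    also have "\<dots> = (x00 * x22 - x02^2) / (x00 * x22)" using x0pos x2pos by (simp add: diff_divide_distrib)
    also have "\<dots> = Dt*(1-b^2)/(x00*x22)" using jB' by simp
    finally have e: "1 - (x02 / sqrt (x00 * x22))^2 = Dt*(1-b^2)/(x00*x22)" .
    have t1: "(x02 / sqrt (x00 * x22))^2 \<le> 1"
    proof -
      have "Dt*(1-b^2)/(x00*x22) > 0" using Dpos b2 X by simp
      then show ?thesis using e by simp
    qed
    have "sin B = sqrt (1 - (x02 / sqrt (x00 * x22))^2)" unfolding Beq by (rule sin_arccos_neg_sq[OF t1])
    moreover have "sin lB = sqrt (1 - b^2)" unfolding lBeq using b2
      by (simp add: sin_arccos_abs abs_square_less_1 less_imp_le)
    ultimately show ?thesis unfolding uu using ratio_helper[OF X Dpos e b2] by simp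
  qed
  have sC: "u = sin lC / sin C"
  proof -
    have sq: "(sqrt (x00 * x22))^2 = x00 * x22" using X by simp
    have "1 - (x03 / sqrt (x00 * x22))^2 = 1 - x03^2 / (x00 * x22)" by (simp add: power_divide sq)
    also have "\<dots> = (x00 * x22 - x03^2) / (x00 * x22)" using x0pos x2pos by (simp add: diff_divide_distrib)
    also have "\<dots> = Dt*(1-c^2)/(x00*x22)" using jC' by simp
    finally have e: "1 - (x03 / sqrt (x00 * x22))^2 = Dt*(1-c^2)/(x00*x22)" .
    have t1: "(x03 / sqrt (x00 * x22))^2 \<le> 1"
    proof -
      have "Dt*(1-c^2)/(x00*x22) > 0" using Dpos c2 X by simp
      then show ?thesis using e by simp
    qed
    have "sin C = sqrt (1 - (x03 / sqrt (x00 * x22))^2)" unfolding Ceq by (rule sin_arccos_neg_sq[OF t1])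
    moreover have "sin lC = sqrt (1 - c^2)" unfolding lCeq using c2
      by (simp add: sin_arccos_abs abs_square_less_1 less_imp_le)
    ultimately show ?thesis unfolding uu using ratio_helper[OF X Dpos e c2] by simp
  qed
  show ?thesis using T sB sC uv by blast
qed


end
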